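(* Let $\mathcal{P}_1$ and $\mathcal{P}_2$ be nonempty convex sets (convex subsets of real vector spaces), and let $u_1, u_2 : \mathcal{P}_1 \times \mathcal{P}_2 \to \mathbb{R}$ be functions such that, for each $u \in \{u_1, u_2\}$, all $\sigma = (\sigma_1,\sigma_2), \tau = (\tau_1,\tau_2) \in \mathcal{P}_1 \times \mathcal{P}_2$ and all $\alpha, \beta \in [0,1]$, $$u\bigl(\alpha\sigma_1 + (1-\alpha)\tau_1,\ \beta\sigma_2 + (1-\beta)\tau_2\bigr) = \alpha\, u\bigl(\sigma_1,\ \beta\sigma_2 + (1-\beta)\tau_2\bigr) + (1-\alpha)\, u\bigl(\tau_1,\ \beta\sigma_2 + (1-\beta)\tau_2\bigr)$$ $$= \beta\, u\bigl(\alpha\sigma_1 + (1-\alpha)\tau_1,\ \sigma_2\bigr) + (1-\beta)\, u\bigl(\alpha\sigma_1 + (1-\alpha)\tau_1,\ \tau_2\bigr).$$ Then the following are equivalent: (a) for all $\sigma, \tau \in \mathcal{P}_1 \times \mathcal{P}_2$: $u_1(\sigma) \geq u_1(\tau)$ if and only if $u_2(\sigma) \leq u_2(\tau)$; (b) there exist $\alpha, \beta \in \mathbb{R}$ with $\alpha > 0$ such that $u_2(\sigma) = -\alpha\, u_1(\sigma) + \beta$ for all $\sigma \in \mathcal{P}_1 \times \mathcal{P}_2$; (c) there exist $\gamma, \delta \in \mathbb{R}$ with $\gamma > 0$ such that, setting $v_1 = \gamma u_1 + \delta$, one has $v_1(\sigma) + u_2(\sigma) = 0$ for all $\sigma \in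 \mathcal{P}_1 \times \mathcal{P}_2$.
   Context: A two-person game is a quadruple $\langle \mathcal{P}_1, \mathcal{P}_2, u_1, u_2\rangle$ of strategy sets and real-valued payoff functions on $\mathcal{P}_1\times\mathcal{P}_2$. Condition (a) says the game is adversarial (strictly competitive); the displayed identities say the game is bilinear (bi-affine); (c) says the game obtained by replacing $u_1$ with a positive affine transformation of it is zero-sum. A function $f$ is a positive affine transformation of $g$ if $f = a g + b$ for some reals $a > 0$, $b$. *)

theory Defs
  imports "HOL-Analysis.Analysis"
begin

definition bilinear_game_payoff ::
  "'a::real_vector set \<Rightarrow> 'b::real_vector set \<Rightarrow> ('a \<times> 'b \<Rightarrow> real) \<Rightarrow> bool" where
  "bilinear_game_payoff P1 P2 u \<longleftrightarrow>
     (\<forall>s1\<in>P1. \<forall>s2\<in>P2. \<forall>t1\<in>P1. \<forall>t2\<in>P2. \<forall>\<alpha>\<in>{0..1::real}. \<forall>\<beta>\<in>{0..1::real}.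
        u (\<alpha> *\<^sub>R s1 + (1 - \<alpha>) *\<^sub>R t1, \<beta> *\<^sub>R s2 + (1 - \<beta>) *\<^sub>R t2)
          = \<alpha> * u (s1, \<beta> *\<^sub>R s2 + (1 - \<beta>) *\<^sub>R t2)
            + (1 - \<alpha>) * u (t1, \<beta> *\<^sub>R s2 + (1 - \<beta>) *\<^sub>R t2)
        \<and> \<alpha> * u (s1, \<beta> *\<^sub>R s2 + (1 - \<beta>) *\<^sub>R t2)
            + (1 - \<alpha>) * u (t1, \<beta> *\<^sub>R s2 + (1 - \<beta>) *\<^sub>R t2)
          = \<beta> * u (\<alpha> *\<^sub>R s1 + (1 - \<alpha>) *\<^sub>R t1, s2)
            + (1 - \<beta>) * u (\<alpha> *\<^sub>R s1 + (1 - \<alpha>) *\<^sub>R t1, t2))"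

end

theory Submission
  imports Defs
begin

lemma alpha_ex:
  fixes a c d :: real assumes "a \<noteq> c"
  shows "\<exists>al. 0 < al \<and> al < 1 \<and> (al*a+(1-al)*d - c)*(a-c) > 0"
proof (cases "(d-c)*(a-c) \<ge> 0")
  case True
  have "(1/2*a+(1-1/2)*d - c)*(a-c) = (a-c)^2/2 + (d-c)*(a-c)/2" by (simp add: field_simps power2_eq_square)
  moreover have "(a-c)^2 > 0" using assms by simp
  ultimately have "(1/2*a+(1-1/2)*d - c)*(a-c) > 0" using True by linarith
  then show ?thesis by (intro exI[of _ "1/2"]) auto
next
  case False
  define t where "t = (c-d)/(a-d)"
  have ad: "a \<noteq> d" using False by auto
  have sg: "(a > c \<and> d < c) \<or> (a < c \<and> d > c)" using False
  proof -
    have "(d-c)*(a-c) < 0" using False by simp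
    then show ?thesis by (auto simp: mult_less_0_iff)
  qed
  have t: "0 < t" "t < 1" using sg unfolding t_def
    by (auto simp: divide_less_eq zero_less_divide_iff)
  have "t*(a-d) = c-d" using ad unfolding t_def by simp
  then have t3: "t*a + (1-t)*d = c" by (simp add: algebra_simps)
  note t = t t3
  show ?thesis
  proof (intro exI[of _ "(1+t)/2"] conjI)
    show "0 < (1+t)/2" "(1+t)/2 < 1" using t by auto
    have e: "((1+t)/2*a+(1-(1+t)/2)*d - c) = (1-t)/2*(a-d)" unfolding t(3)[symmetric] by (simp add: field_simps)
    moreover have "(a-d)*(a-c) > 0" using False
      using sg by (auto simp: zero_less_mult_iff)
    moreover have "(1-t)/2 > 0" using t by simp
    ultimately have "(1-t)/2*((a-d)*(a-c)) > 0" by simp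
    then show "((1+t)/2*a+(1-(1+t)/2)*d - c)*(a-c) > 0" unfolding e by (simp add: mult.assoc)
  qed
qed

definition LL :: "'c set \<Rightarrow> ('c \<Rightarrow> real) \<Rightarrow> ('c \<Rightarrow> real) \<Rightarrow> real set \<Rightarrow> bool" where
  "LL S u1 u2 I \<longleftrightarrow> (\<exists>m c. \<forall>w\<in>S. u1 w \<in> I \<longrightarrow> u2 w = m * u1 w + c)"

lemma LL_mono: "LL S u1 u2 J \<Longrightarrow> I \<subseteq> J \<Longrightarrow> LL S u1 u2 I"
  unfolding LL_def by blast

lemma LL_glue:
  assumes "LL S u1 u2 I" "LL S u1 u2 J" "x \<in> S" "y \<in> S" "u1 x \<noteq> u1 y"
    "u1 x \<in> I \<inter> J" "u1 y \<in> I \<inter> J"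
  shows "LL S u1 u2 (I \<union> J)"
proof -
  obtain m1 c1 where 1: "\<forall>w\<in>S. u1 w \<in> I \<longrightarrow> u2 w = m1 * u1 w + c1" using assms(1) unfolding LL_def by blast
  obtain m2 c2 where 2: "\<forall>w\<in>S. u1 w \<in> J \<longrightarrow> u2 w = m2 * u1 w + c2" using assms(2) unfolding LL_def by blast
  have ex: "m1 * u1 x + c1 = m2 * u1 x + c2"
    using 1[rule_format, of x] 2[rule_format, of x] assms(3,6) by simp
  have ey: "m1 * u1 y + c1 = m2 * u1 y + c2"
    using 1[rule_format, of y] 2[rule_format, of y] assms(4,7) by simp
  have "(m1 - m2) * (u1 x - u1 y) = 0" using ex ey by (simp add: algebra_simps)
  then have m: "m1 = m2" using assms(5) by simp
  then have c: "c1 = c2" using ex by simp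
  have "\<forall>w\<in>S. u1 w \<in> I \<union> J \<longrightarrow> u2 w = m1 * u1 w + c1"
  proof (intro ballI impI)
    fix w assume w: "w \<in> S" "u1 w \<in> I \<union> J"
    show "u2 w = m1 * u1 w + c1"
    proof (cases "u1 w \<in> I")
      case True
      then show ?thesis using 1 w(1) by blast
    next
      case False
      then have "u1 w \<in> J" using w(2) by blast
      then show ?thesis using 2 w(1) m c by simp
    qed
  qed
  then show ?thesis unfolding LL_def by blast
qed

lemma LL_line:
  assumes E: "\<forall>x\<in>S. \<forall>y\<in>S. u1 x = u1 y \<longrightarrow> u2 x = u2 y"
    and g: "\<And>l. 0 \<le> l \<Longrightarrow> l \<le> 1 \<Longrightarrow> g l \<in> S \<and> u1 (g l) = l * u1 (g 1) + (1-l) * u1 (g 0)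
               \<and> u2 (g l) = l * u2 (g 1) + (1-l) * u2 (g 0)"
  shows "LL S u1 u2 {min (u1 (g 1)) (u1 (g 0)) .. max (u1 (g 1)) (u1 (g 0))}"
proof (cases "u1 (g 1) = u1 (g 0)")
  case True
  show ?thesis unfolding LL_def
  proof (rule exI[of _ 0], rule exI[of _ "u2 (g 1)"], intro ballI impI)
    fix w assume w: "w \<in> S" "u1 w \<in> {min (u1 (g 1)) (u1 (g 0)) .. max (u1 (g 1)) (u1 (g 0))}"
    then have "u1 w = u1 (g 1)" using True by auto
    moreover have "g 1 \<in> S" using g[of 1] by simp
    ultimately show "u2 w = 0 * u1 w + u2 (g 1)" using E[rule_format, of w "g 1"] w(1) by simp
  qed
next
  case False
  define a where "a = u1 (g 1)"
  define b where "b = u1 (g 0)"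
  define A where "A = u2 (g 1)"
  define B where "B = u2 (g 0)"
  define m where "m = (A - B) / (a - b)"
  have ab: "a \<noteq> b" using False a_def b_def by simp
  show ?thesis unfolding LL_def a_def[symmetric] b_def[symmetric]
  proof (rule exI[of _ m], rule exI[of _ "A - m * a"], intro ballI impI)
    fix w assume w: "w \<in> S" "u1 w \<in> {min a b .. max a b}"
    define l where "l = (u1 w - b) / (a - b)"
    have l01: "0 \<le> l \<and> l \<le> 1"
    proof (cases "a < b")
      case True
      then show ?thesis using w unfolding l_def by (auto simp: divide_le_eq le_divide_eq)
    next
      case False
      then have "b < a" using ab by simp
      then show ?thesis using w unfolding l_def by (auto simp: divide_le_eq le_divide_eq)
    qed
    have lw: "l * (a - b) = u1 w - b" unfolding l_def using ab by simp
    have gl: "g l \<in> S" "u1 (g l) = l * a + (1-l) * b" "u2 (g l) = l * A + (1-l) * B"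
      using g[of l] l01 a_def b_def A_def B_def by auto
    have "u1 (g l) = u1 w" using gl(2) lw by (simp add: algebra_simps)
    then have "u2 (g l) = u2 w" using E[rule_format, of "g l" w] gl(1) w(1) by simp
    then have "u2 w = l * A + (1-l) * B" using gl(3) by simp
    moreover have "m * (a - b) = A - B" unfolding m_def using ab by simp
    ultimately show "u2 w = m * u1 w + (A - m * a)"
    proof -
      assume h1: "u2 w = l * A + (1-l) * B" and h2: "m * (a - b) = A - B"
      have uw: "u1 w = l * (a - b) + b" using lw by simp
      have "m * u1 w + (A - m * a) = A - m * (a - b) + l * (m * (a - b))" by (simp add: uw algebra_simps)
      also have "\<dots> = A - (A - B) + l * (A - B)" by (simp only: h2)
      finally show ?thesis using h1 by (simp add: algebra_simps)
    qed
  qed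
qed




lemma bil_fst:
  assumes "bilinear_game_payoff P1 P2 u" "s1 \<in> P1" "t1 \<in> P1" "s2 \<in> P2" "0 \<le> l" "l \<le> 1"
  shows "u (l *\<^sub>R s1 + (1 - l) *\<^sub>R t1, s2) = l * u (s1, s2) + (1 - l) * u (t1, s2)"
proof -
  have "0 \<le> l \<and> l \<le> 1" using assms by simp
  note h = conjunct1[OF assms(1)[unfolded bilinear_game_payoff_def, rule_format, of s1 s2 t1 s2 l 1]]
  show ?thesis using h assms(2-) by simp
qed

lemma bil_snd:
  assumes "bilinear_game_payoff P1 P2 u" "s1 \<in> P1" "s2 \<in> P2" "t2 \<in> P2" "0 \<le> l" "l \<le> 1"
  shows "u (s1, l *\<^sub>R s2 + (1 - l) *\<^sub>R t2) = l * u (s1, s2) + (1 - l) * u (s1, t2)"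
proof -
  note h = conjunct2[OF assms(1)[unfolded bilinear_game_payoff_def, rule_format, of s1 s2 s1 t2 1 l]]
  show ?thesis using h assms(2-) by simp
qed

lemma adj_fst:
  assumes "convex P1" "bilinear_game_payoff P1 P2 u1" "bilinear_game_payoff P1 P2 u2"
    and E: "\<forall>x\<in>P1 \<times> P2. \<forall>y\<in>P1 \<times> P2. u1 x = u1 y \<longrightarrow> u2 x = u2 y"
    and "s1 \<in> P1" "t1 \<in> P1" "s2 \<in> P2"
  shows "LL (P1 \<times> P2) u1 u2 {min (u1 (s1, s2)) (u1 (t1, s2)) .. max (u1 (s1, s2)) (u1 (t1, s2))}"
proof -
  define g where "g = (\<lambda>l::real. (l *\<^sub>R s1 + (1 - l) *\<^sub>R t1, s2))"
  have "LL (P1 \<times> P2) u1 u2 {min (u1 (g 1)) (u1 (g 0)) .. max (u1 (g 1)) (u1 (g 0))}"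
  proof (rule LL_line[OF E, of g])
    fix l :: real assume l: "0 \<le> l" "l \<le> 1"
    have "l *\<^sub>R s1 + (1 - l) *\<^sub>R t1 \<in> P1"
      using convexD[OF assms(1) assms(5,6), of l "1-l"] l by simp
    then have "g l \<in> P1 \<times> P2" unfolding g_def using assms(7) by simp
    moreover have "g 1 = (s1, s2)" "g 0 = (t1, s2)" unfolding g_def by simp_all
    moreover have "u1 (g l) = l * u1 (s1, s2) + (1 - l) * u1 (t1, s2)"
      unfolding g_def by (rule bil_fst[OF assms(2) assms(5-7) l])
    moreover have "u2 (g l) = l * u2 (s1, s2) + (1 - l) * u2 (t1, s2)"
      unfolding g_def by (rule bil_fst[OF assms(3) assms(5-7) l])
    ultimately show "g l \<in> P1 \<times> P2 \<and> u1 (g l) = l * u1 (g 1) + (1 - l) * u1 (g 0) \<and>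
        u2 (g l) = l * u2 (g 1) + (1 - l) * u2 (g 0)"
      by simp
  qed
  moreover have "g 1 = (s1, s2)" "g 0 = (t1, s2)" unfolding g_def by simp_all
  ultimately show ?thesis by simp
qed

lemma adj_snd:
  assumes "convex P2" "bilinear_game_payoff P1 P2 u1" "bilinear_game_payoff P1 P2 u2"
    and E: "\<forall>x\<in>P1 \<times> P2. \<forall>y\<in>P1 \<times> P2. u1 x = u1 y \<longrightarrow> u2 x = u2 y"
    and "s1 \<in> P1" "s2 \<in> P2" "t2 \<in> P2"
  shows "LL (P1 \<times> P2) u1 u2 {min (u1 (s1, s2)) (u1 (s1, t2)) .. max (u1 (s1, s2)) (u1 (s1, t2))}"
proof -
  define g where "g = (\<lambda>l::real. (s1, l *\<^sub>R s2 + (1 - l) *\<^sub>R t2))"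
  have "LL (P1 \<times> P2) u1 u2 {min (u1 (g 1)) (u1 (g 0)) .. max (u1 (g 1)) (u1 (g 0))}"
  proof (rule LL_line[OF E, of g])
    fix l :: real assume l: "0 \<le> l" "l \<le> 1"
    have "l *\<^sub>R s2 + (1 - l) *\<^sub>R t2 \<in> P2"
      using convexD[OF assms(1) assms(6,7), of l "1-l"] l by simp
    then have "g l \<in> P1 \<times> P2" unfolding g_def using assms(5) by simp
    moreover have "g 1 = (s1, s2)" "g 0 = (s1, t2)" unfolding g_def by simp_all
    moreover have "u1 (g l) = l * u1 (s1, s2) + (1 - l) * u1 (s1, t2)"
      unfolding g_def by (rule bil_snd[OF assms(2) assms(5-7) l])
    moreover have "u2 (g l) = l * u2 (s1, s2) + (1 - l) * u2 (s1, t2)"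
      unfolding g_def by (rule bil_snd[OF assms(3) assms(5-7) l])
    ultimately show "g l \<in> P1 \<times> P2 \<and> u1 (g l) = l * u1 (g 1) + (1 - l) * u1 (g 0) \<and>
        u2 (g l) = l * u2 (g 1) + (1 - l) * u2 (g 0)"
      by simp
  qed
  moreover have "g 1 = (s1, s2)" "g 0 = (s1, t2)" unfolding g_def by simp_all
  ultimately show ?thesis by simp
qed

lemma pair_LL:
  assumes c1: "convex P1" and c2: "convex P2"
    and b1: "bilinear_game_payoff P1 P2 u1" and b2: "bilinear_game_payoff P1 P2 u2"
    and E: "\<forall>x\<in>P1 \<times> P2. \<forall>y\<in>P1 \<times> P2. u1 x = u1 y \<longrightarrow> u2 x = u2 y"
    and x: "x \<in> P1 \<times> P2" and y: "y \<in> P1 \<times> P2"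
  shows "LL (P1 \<times> P2) u1 u2 {min (u1 x) (u1 y) .. max (u1 x) (u1 y)}"
proof -
  obtain s1 s2 where xs: "x = (s1, s2)" "s1 \<in> P1" "s2 \<in> P2" using x by auto
  obtain t1 t2 where yt: "y = (t1, t2)" "t1 \<in> P1" "t2 \<in> P2" using y by auto
  define a where "a = u1 (s1, s2)"
  define b where "b = u1 (t1, t2)"
  define c where "c = u1 (s1, t2)"
  define d where "d = u1 (t1, s2)"
  have Lac: "LL (P1 \<times> P2) u1 u2 {min a c .. max a c}"
    unfolding a_def c_def by (rule adj_snd[OF c2 b1 b2 E]) (use xs yt in auto)
  have Lcb: "LL (P1 \<times> P2) u1 u2 {min c b .. max c b}"
    unfolding b_def c_def by (rule adj_fst[OF c1 b1 b2 E]) (use xs yt in auto)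
  have goal: "LL (P1 \<times> P2) u1 u2 {min a b .. max a b}"
  proof (cases "(a < c \<and> c < b) \<or> (b < c \<and> c < a)")
    case False
    then have "{min a b .. max a b} \<subseteq> {min a c .. max a c} \<or> {min a b .. max a b} \<subseteq> {min c b .. max c b}"
      by (cases "a \<le> b"; cases "c \<le> a"; cases "c \<le> b") (auto simp: min_def max_def)
    then show ?thesis using Lac Lcb LL_mono by blast
  next
    case True
    then have "a \<noteq> c" by auto
    then obtain al where al: "0 < al" "al < 1" "(al*a+(1-al)*d - c)*(a-c) > 0"
      using alpha_ex by blast
    define v1 where "v1 = al*a+(1-al)*d"
    define v2 where "v2 = al*c+(1-al)*b"
    define xa where "xa = al *\<^sub>R s1 + (1 - al) *\<^sub>R t1"
    have xa: "xa \<in> P1" unfolding xa_def using convexD[OF c1 xs(2) yt(2), of al "1-al"] al by simp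
    have uv1: "u1 (xa, s2) = v1" unfolding xa_def v1_def a_def d_def
      using bil_fst[OF b1, of s1 t1 s2 al] xs yt al by simp
    have uv2: "u1 (xa, t2) = v2" unfolding xa_def v2_def c_def b_def
      using bil_fst[OF b1, of s1 t1 t2 al] xs yt al by simp
    have Lv: "LL (P1 \<times> P2) u1 u2 {min v1 v2 .. max v1 v2}"
      unfolding uv1[symmetric] uv2[symmetric] by (rule adj_snd[OF c2 b1 b2 E]) (use xs yt xa in auto)
    have v2c: "v2 - c = (1 - al) * (b - c)" unfolding v2_def by (simp add: algebra_simps)
    have ord: "(a < c \<and> c < b \<and> v1 < c \<and> c < v2 \<and> v2 \<le> b) \<or> (b < c \<and> c < a \<and> v2 < c \<and> c < v1 \<and> b \<le> v2)"
    proof (cases "a < c")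
      case True
      with \<open>(a < c \<and> c < b) \<or> (b < c \<and> c < a)\<close> have "c < b" by auto
      have "v1 < c" using al(3) True unfolding v1_def by (simp add: zero_less_mult_iff)
      moreover have "(1 - al) * (b - c) > 0" using al \<open>c < b\<close> by simp
      moreover have "(1 - al) * (b - c) \<le> b - c" using al \<open>c < b\<close> by (simp add: mult_le_cancel_right1 algebra_simps)
      ultimately have "v1 < c" "c < v2" "v2 \<le> b" using v2c by linarith+
      then show ?thesis using True \<open>c < b\<close> by auto
    next
      case False
      with \<open>(a < c \<and> c < b) \<or> (b < c \<and> c < a)\<close> have "c < a" "b < c" by auto
      have "v1 > c" using al(3) \<open>c < a\<close> unfolding v1_def by (simp add: zero_less_mult_iff)
      moreover have "(1 - al) * (c - b) > 0" using al \<open>b < c\<close> by simp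
      moreover have "(1 - al) * (c - b) \<le> c - b" using al \<open>b < c\<close> by (simp add: mult_le_cancel_right1 algebra_simps)
      moreover have "v2 - c = - ((1 - al) * (c - b))" using v2c by (simp add: algebra_simps)
      ultimately have "c < v1" "v2 < c" "b \<le> v2" by linarith+
      then show ?thesis using \<open>c < a\<close> \<open>b < c\<close> by auto
    qed
    have pc: "(s1, t2) \<in> P1 \<times> P2" "(xa, t2) \<in> P1 \<times> P2" "(xa, s2) \<in> P1 \<times> P2" "(s1, s2) \<in> P1 \<times> P2"
      using xs yt xa by auto
    have L1: "LL (P1 \<times> P2) u1 u2 ({min c b .. max c b} \<union> {min v1 v2 .. max v1 v2})"
    proof -
      have f: "c \<noteq> v2" "c \<in> {min c b .. max c b} \<inter> {min v1 v2 .. max v1 v2}"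
        "v2 \<in> {min c b .. max c b} \<inter> {min v1 v2 .. max v1 v2}"
        using ord by (auto simp: min_def max_def)
      show ?thesis
        by (rule LL_glue[OF Lcb Lv pc(1) pc(2)]) (simp_all only: uv2 c_def[symmetric] f not_False_eq_True)
    qed
    have L2: "LL (P1 \<times> P2) u1 u2 ({min a c .. max a c} \<union> ({min c b .. max c b} \<union> {min v1 v2 .. max v1 v2}))"
    proof (cases "v1 \<in> {min a c .. max a c}")
      case True
      show ?thesis
      proof -
        have f: "c \<noteq> v1" "c \<in> {min a c .. max a c} \<inter> ({min c b .. max c b} \<union> {min v1 v2 .. max v1 v2})"
          "v1 \<in> {min a c .. max a c} \<inter> ({min c b .. max c b} \<union> {min v1 v2 .. max v1 v2})"
          using ord True by (auto simp: min_def max_def)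
        show ?thesis
          by (rule LL_glue[OF Lac L1 pc(1) pc(3)]) (simp_all only: uv1 c_def[symmetric] f not_False_eq_True)
      qed
    next
      case False
      show ?thesis
      proof -
        have f: "c \<noteq> a" "c \<in> {min a c .. max a c} \<inter> ({min c b .. max c b} \<union> {min v1 v2 .. max v1 v2})"
          "a \<in> {min a c .. max a c} \<inter> ({min c b .. max c b} \<union> {min v1 v2 .. max v1 v2})"
          using ord False by (auto simp: min_def max_def)
        show ?thesis
          by (rule LL_glue[OF Lac L1 pc(1) pc(4)]) (simp_all only: a_def[symmetric] c_def[symmetric] f not_False_eq_True)
      qed
    qed
    show ?thesis
      by (rule LL_mono[OF L2]) (use ord in \<open>auto simp: min_def max_def\<close>)
  qed
  then show ?thesis unfolding a_def b_def xs yt .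
qed

lemma memb1: "(x::real) \<in> {min x y..max x y}" by simp
lemma memb2: "(y::real) \<in> {min x y..max x y}" by simp

theorem theorem2:
  fixes P1 :: "'a::real_vector set" and P2 :: "'b::real_vector set"
    and u1 u2 :: "'a \<times> 'b \<Rightarrow> real"
  assumes "convex P1" "convex P2" "P1 \<noteq> {}" "P2 \<noteq> {}"
    and "bilinear_game_payoff P1 P2 u1" "bilinear_game_payoff P1 P2 u2"
  shows "((\<forall>\<sigma>\<in>P1 \<times> P2. \<forall>\<tau>\<in>P1 \<times> P2. u1 \<sigma> \<ge> u1 \<tau> \<longleftrightarrow> u2 \<sigma> \<le> u2 \<tau>)
          \<longleftrightarrow> (\<exists>\<alpha> \<beta>::real. \<alpha> > 0 \<and> (\<forall>\<sigma>\<in>P1 \<times> P2. u2 \<sigma> = - \<alpha> * u1 \<sigma> + \<beta>)))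
       \<and> ((\<exists>\<alpha> \<beta>::real. \<alpha> > 0 \<and> (\<forall>\<sigma>\<in>P1 \<times> P2. u2 \<sigma> = - \<alpha> * u1 \<sigma> + \<beta>))
          \<longleftrightarrow> (\<exists>\<gamma> \<delta>::real. \<gamma> > 0 \<and>
                 (let v1 = (\<lambda>\<sigma>. \<gamma> * u1 \<sigma> + \<delta>) in \<forall>\<sigma>\<in>P1 \<times> P2. v1 \<sigma> + u2 \<sigma> = 0)))"
    proof -
  let ?S = "P1 \<times> P2"
  have AB: "(\<forall>\<sigma>\<in>P1 \<times> P2. \<forall>\<tau>\<in>P1 \<times> P2. u1 \<sigma> \<ge> u1 \<tau> \<longleftrightarrow> u2 \<sigma> \<le> u2 \<tau>)
          \<longleftrightarrow> (\<exists>\<alpha> \<beta>::real. \<alpha> > 0 \<and> (\<forall>\<sigma>\<in>P1 \<times> P2. u2 \<sigma> = - \<alpha> * u1 \<sigma> + \<beta>))"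
  proof
    assume H: "\<forall>\<sigma>\<in>P1 \<times> P2. \<forall>\<tau>\<in>P1 \<times> P2. u1 \<sigma> \<ge> u1 \<tau> \<longleftrightarrow> u2 \<sigma> \<le> u2 \<tau>"
    have E: "\<forall>x\<in>?S. \<forall>y\<in>?S. u1 x = u1 y \<longrightarrow> u2 x = u2 y"
    proof (intro ballI impI)
      fix x y assume x: "x \<in> ?S" and y: "y \<in> ?S" and e: "u1 x = u1 y"
      have "u2 x \<le> u2 y" using H[rule_format, OF x y] e by simp
      moreover have "u2 y \<le> u2 x" using H[rule_format, OF y x] e by simp
      ultimately show "u2 x = u2 y" by simp
    qed
    show "\<exists>\<alpha> \<beta>::real. \<alpha> > 0 \<and> (\<forall>\<sigma>\<in>P1 \<times> P2. u2 \<sigma> = - \<alpha> * u1 \<sigma> + \<beta>)"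
    proof (cases "\<forall>x\<in>?S. \<forall>y\<in>?S. u1 x = u1 y")
      case True
      obtain p where p: "p \<in> ?S" using assms(3,4) by auto
      have Hp: "\<forall>\<sigma>\<in>P1 \<times> P2. u2 \<sigma> = - 1 * u1 \<sigma> + (u2 p + u1 p)"
      proof
        fix \<sigma> assume s: "\<sigma> \<in> ?S"
        have e: "u1 \<sigma> = u1 p" using True s p by blast
        then have "u2 \<sigma> = u2 p" using E[rule_format, OF s p] by simp
        then show "u2 \<sigma> = - 1 * u1 \<sigma> + (u2 p + u1 p)" using e by simp
      qed
      show ?thesis
        apply (rule exI[of _ "1::real"], rule exI[of _ "u2 p + u1 p"])
        using Hp by simp
    next
      case False
      then obtain x0 y0 where xy: "x0 \<in> ?S" "y0 \<in> ?S" "u1 x0 \<noteq> u1 y0" by blast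
      define a where "a = u1 x0"
      define b where "b = u1 y0"
      have ab: "a \<noteq> b" using xy(3) a_def b_def by simp
      obtain m0 c0 where L0: "\<forall>w\<in>?S. u1 w \<in> {min a b..max a b} \<longrightarrow> u2 w = m0 * u1 w + c0"
        using pair_LL[OF assms(1,2,5,6) E xy(1,2)] unfolding LL_def a_def b_def by blast
      have ex0: "u2 x0 = m0 * a + c0" using L0[rule_format, OF xy(1)] memb1[of a b] unfolding a_def by simp
      have ey0: "u2 y0 = m0 * b + c0" using L0[rule_format, OF xy(2)] memb2[of b a] unfolding b_def by simp
      have all: "\<forall>w\<in>?S. u2 w = m0 * u1 w + c0"
      proof
        fix w assume w: "w \<in> ?S"
        define c where "c = u1 w"
        consider (inn) "c \<in> {min a b..max a b}" | (ca) "b \<in> {min a c..max a c}" | (cb) "a \<in> {min b c..max b c}"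
          by (cases "a \<le> b"; cases "c \<le> a"; cases "c \<le> b") (auto simp: min_def max_def)
        then show "u2 w = m0 * u1 w + c0"
        proof cases
          case inn
          then show ?thesis using L0[rule_format, OF w] unfolding c_def by blast
        next
          case ca
          obtain m1 c1 where L1: "\<forall>v\<in>?S. u1 v \<in> {min a c..max a c} \<longrightarrow> u2 v = m1 * u1 v + c1"
            using pair_LL[OF assms(1,2,5,6) E xy(1) w] unfolding LL_def a_def c_def by blast
          have h1: "u2 x0 = m1 * a + c1" using L1[rule_format, OF xy(1)] memb1[of a c] unfolding a_def by simp
          have h2: "u2 y0 = m1 * b + c1" using L1[rule_format, OF xy(2)] ca unfolding b_def by simp
          have h3: "u2 w = m1 * c + c1" using L1[rule_format, OF w] memb2[of c] unfolding c_def by simp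
          have "(m1 - m0) * (a - b) = 0" using h1 h2 ex0 ey0 by (simp add: algebra_simps)
          then have "m1 = m0" using ab by simp
          then have "c1 = c0" using h1 ex0 by simp
          then show ?thesis using h3 \<open>m1 = m0\<close> c_def by simp
        next
          case cb
          obtain m1 c1 where L1: "\<forall>v\<in>?S. u1 v \<in> {min b c..max b c} \<longrightarrow> u2 v = m1 * u1 v + c1"
            using pair_LL[OF assms(1,2,5,6) E xy(2) w] unfolding LL_def b_def c_def by blast
          have h1: "u2 y0 = m1 * b + c1" using L1[rule_format, OF xy(2)] memb1[of b c] unfolding b_def by simp
          have h2: "u2 x0 = m1 * a + c1" using L1[rule_format, OF xy(1)] cb unfolding a_def by simp
          have h3: "u2 w = m1 * c + c1" using L1[rule_format, OF w] memb2[of c] unfolding c_def by simp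
          have "(m1 - m0) * (a - b) = 0" using h1 h2 ex0 ey0 by (simp add: algebra_simps)
          then have "m1 = m0" using ab by simp
          then have "c1 = c0" using h1 ey0 by simp
          then show ?thesis using h3 \<open>m1 = m0\<close> c_def by simp
        qed
      qed
      have "(a - b) * (u2 x0 - u2 y0) < 0"
      proof (cases "a < b")
        case True
        then have "\<not> u1 x0 \<ge> u1 y0" unfolding a_def b_def by simp
        then have "u2 x0 > u2 y0" using H[rule_format, OF xy(1,2)] by simp
        then show ?thesis using True by (simp add: mult_less_0_iff)
      next
        case False
        then have "b < a" using ab by simp
        then have "\<not> u1 y0 \<ge> u1 x0" unfolding a_def b_def by simp
        then have "u2 y0 > u2 x0" using H[rule_format, OF xy(2,1)] by simp
        then show ?thesis using \<open>b < a\<close> by (simp add: mult_less_0_iff)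
      qed
      moreover have "(a - b) * (u2 x0 - u2 y0) = m0 * (a - b)^2"
        using ex0 ey0 by (simp add: power2_eq_square algebra_simps)
      moreover have "(a - b)^2 > 0" using ab by simp
      ultimately have "m0 < 0" by (simp add: mult_less_0_iff)
      have Hm: "\<forall>\<sigma>\<in>P1 \<times> P2. u2 \<sigma> = - (- m0) * u1 \<sigma> + c0" using all by simp
      show ?thesis
        apply (rule exI[of _ "- m0"], rule exI[of _ c0])
        using Hm \<open>m0 < 0\<close> by simp
    qed
  next
    assume "\<exists>\<alpha> \<beta>::real. \<alpha> > 0 \<and> (\<forall>\<sigma>\<in>P1 \<times> P2. u2 \<sigma> = - \<alpha> * u1 \<sigma> + \<beta>)"
    then obtain al be :: real where al: "al > 0" and eq: "\<forall>\<sigma>\<in>P1 \<times> P2. u2 \<sigma> = - al * u1 \<sigma> + be" by blast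
    show "\<forall>\<sigma>\<in>P1 \<times> P2. \<forall>\<tau>\<in>P1 \<times> P2. u1 \<sigma> \<ge> u1 \<tau> \<longleftrightarrow> u2 \<sigma> \<le> u2 \<tau>"
    proof (intro ballI)
      fix s t assume s: "s \<in> ?S" and t: "t \<in> ?S"
      have "u2 s \<le> u2 t \<longleftrightarrow> al * u1 t \<le> al * u1 s" using eq s t by auto
      also have "\<dots> \<longleftrightarrow> u1 t \<le> u1 s" using al by simp
      finally show "u1 s \<ge> u1 t \<longleftrightarrow> u2 s \<le> u2 t" by simp
    qed
  qed
  have BC: "(\<exists>\<alpha> \<beta>::real. \<alpha> > 0 \<and> (\<forall>\<sigma>\<in>P1 \<times> P2. u2 \<sigma> = - \<alpha> * u1 \<sigma> + \<beta>))
          \<longleftrightarrow> (\<exists>\<gamma> \<delta>::real. \<gamma> > 0 \<and>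
                 (let v1 = (\<lambda>\<sigma>. \<gamma> * u1 \<sigma> + \<delta>) in \<forall>\<sigma>\<in>P1 \<times> P2. v1 \<sigma> + u2 \<sigma> = 0))"
  proof
    assume "\<exists>\<alpha> \<beta>::real. \<alpha> > 0 \<and> (\<forall>\<sigma>\<in>P1 \<times> P2. u2 \<sigma> = - \<alpha> * u1 \<sigma> + \<beta>)"
    then obtain al be :: real where al: "al > 0" and eq: "\<forall>\<sigma>\<in>P1 \<times> P2. u2 \<sigma> = - al * u1 \<sigma> + be" by blast
    have "let v1 = (\<lambda>\<sigma>. al * u1 \<sigma> + (- be)) in \<forall>\<sigma>\<in>P1 \<times> P2. v1 \<sigma> + u2 \<sigma> = 0"
      using eq by (simp add: Let_def)
    then show "\<exists>\<gamma> \<delta>::real. \<gamma> > 0 \<and>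
                 (let v1 = (\<lambda>\<sigma>. \<gamma> * u1 \<sigma> + \<delta>) in \<forall>\<sigma>\<in>P1 \<times> P2. v1 \<sigma> + u2 \<sigma> = 0)"
      using al by blast
  next
    assume "\<exists>\<gamma> \<delta>::real. \<gamma> > 0 \<and>
                 (let v1 = (\<lambda>\<sigma>. \<gamma> * u1 \<sigma> + \<delta>) in \<forall>\<sigma>\<in>P1 \<times> P2. v1 \<sigma> + u2 \<sigma> = 0)"
    then obtain ga de :: real where ga: "ga > 0"
      and eq: "\<forall>\<sigma>\<in>P1 \<times> P2. ga * u1 \<sigma> + de + u2 \<sigma> = 0" by (auto simp: Let_def)
    have "\<forall>\<sigma>\<in>P1 \<times> P2. u2 \<sigma> = - ga * u1 \<sigma> + (- de)"
    proof
      fix s assume "s \<in> ?S"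
      then have "ga * u1 s + de + u2 s = 0" using eq by blast
      then show "u2 s = - ga * u1 s + (- de)" by linarith
    qed
    then show "\<exists>\<alpha> \<beta>::real. \<alpha> > 0 \<and> (\<forall>\<sigma>\<in>P1 \<times> P2. u2 \<sigma> = - \<alpha> * u1 \<sigma> + \<beta>)"
      using ga by blast
  qed
  show ?thesis using AB BC by blast
qed

end
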